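(* There is a constant $C$ such that for every sufficiently large $n$ there exists a $3$-planar graph of girth $5$ on $n$ vertices with at least $2.5n-C$ edges.
   Context: All graphs are finite and simple. A graph is $k$-planar if it admits a drawing in the plane in which every edge is crossed at most $k$ times. The girth of a graph is the length of its shortest cycle. (The paper states the edge count as $2.5n-O(1)$.) *)

theory Defs
  imports "HOL-Analysis.Analysis"
begin

definition simple_graph :: "'a set \<Rightarrow> 'a set set \<Rightarrow> bool" where
  "simple_graph V E \<longleftrightarrow> finite V \<and> (\<forall>e\<in>E. e \<subseteq> V \<and> card e = 2)"

definition has_cycle_of_length :: "'a set \<Rightarrow> 'a set set \<Rightarrow> nat \<Rightarrow> bool" where
  "has_cycle_of_length V E L \<longleftrightarrow> L \<ge> 3 \<and>
     (\<exists>c :: nat \<Rightarrow> 'a. inj_on c {..<L} \<and> c ` {..<L} \<subseteq> V \<and>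
        (\<forall>i<L. {c i, c ((i + 1) mod L)} \<in> E))"

definition girth :: "'a set \<Rightarrow> 'a set set \<Rightarrow> nat" where
  "girth V E = (LEAST L. has_cycle_of_length V E L)"

definition curve_interior :: "(real \<Rightarrow> real^2) \<Rightarrow> (real^2) set" where
  "curve_interior g = g ` {0<..<1}"

definition k_planar_drawing ::
  "nat \<Rightarrow> 'a set \<Rightarrow> 'a set set \<Rightarrow> ('a \<Rightarrow> real^2) \<Rightarrow> ('a set \<Rightarrow> real \<Rightarrow> real^2) \<Rightarrow> bool" where
  "k_planar_drawing k V E pos \<gamma> \<longleftrightarrow>
     inj_on pos V \<and>
     (\<forall>e\<in>E. arc (\<gamma> e) \<and>
        (\<exists>u v. e = {u, v} \<and> pathstart (\<gamma> e) = pos u \<and> pathfinish (\<gamma> e) = pos v) \<and>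
        curve_interior (\<gamma> e) \<inter> pos ` V = {}) \<and>
     (\<forall>e\<in>E. finite {(f, p). f \<in> E \<and> f \<noteq> e \<and> p \<in> curve_interior (\<gamma> e) \<inter> curve_interior (\<gamma> f)} \<and>
        card {(f, p). f \<in> E \<and> f \<noteq> e \<and> p \<in> curve_interior (\<gamma> e) \<inter> curve_interior (\<gamma> f)} \<le> k)"

definition k_planar :: "nat \<Rightarrow> 'a set \<Rightarrow> 'a set set \<Rightarrow> bool" where
  "k_planar k V E \<longleftrightarrow> (\<exists>pos \<gamma>. k_planar_drawing k V E pos \<gamma>)"

end

theory Submission
  imports Defs
begin

definition qc1 :: "nat \<Rightarrow> real" where
  "qc1 x = [4,4,4,4,4,2,0,-2,-4,-4,-4,-4,-4,-2,0,2] ! x"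
definition qc2 :: "nat \<Rightarrow> real" where
  "qc2 x = [-4,-2,0,2,4,4,4,4,4,2,0,-2,-4,-4,-4,-4] ! x"
definition HD :: "(nat \<times> nat) list" where
  "HD = [(0,1), (1,2), (2,3), (3,4), (4,5), (5,6), (6,7), (7,8), (8,9), (9,10), (10,11), (11,12), (12,13), (13,14), (14,15), (15,0)]"
definition GD :: "(nat \<times> nat) list" where
  "GD = [(0,3), (0,13), (1,1), (2,5), (2,15), (3,3), (4,7), (4,1), (5,5), (6,9), (6,3), (7,7), (8,11), (8,5), (9,9), (10,13), (10,7), (11,11), (12,15), (12,9), (13,13), (14,1), (14,11), (15,15)]"
definition CRL :: "((nat \<times> nat) \<times> (nat \<times> nat)) list" where
  "CRL = [((0,3),(1,1)), ((0,3),(2,15)), ((0,3),(4,1)), ((0,13),(12,15)), ((0,13),(14,1)), ((0,13),(15,15)), ((1,1),(0,3)), ((1,1),(2,15)), ((2,5),(3,3)), ((2,5),(4,1)), ((2,5),(6,3)), ((2,15),(0,3)), ((2,15),(1,1)), ((2,15),(14,1)), ((3,3),(2,5)), ((3,3),(4,1)), ((4,7),(5,5)), ((4,7),(6,3)), ((4,7),(8,5)), ((4,1),(0,3)), ((4,1),(2,5)), ((4,1),(3,3)), ((5,5),(4,7)), ((5,5),(6,3)), ((6,9),(7,7)), ((6,9),(8,5)), ((6,9),(10,7)), ((6,3),(2,5)), ((6,3),(4,7)), ((6,3),(5,5)), ((7,7),(6,9)), ((7,7),(8,5)), ((8,11),(9,9)), ((8,11),(10,7)), ((8,11),(12,9)),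 ((8,5),(4,7)), ((8,5),(6,9)), ((8,5),(7,7)), ((9,9),(8,11)), ((9,9),(10,7)), ((10,13),(11,11)), ((10,13),(12,9)), ((10,13),(14,11)), ((10,7),(6,9)), ((10,7),(8,11)), ((10,7),(9,9)), ((11,11),(10,13)), ((11,11),(12,9)), ((12,15),(0,13)), ((12,15),(13,13)), ((12,15),(14,11)), ((12,9),(8,11)), ((12,9),(10,13)), ((12,9),(11,11)), ((13,13),(12,15)), ((13,13),(14,11)), ((14,1),(0,13)), ((14,1),(2,15)), ((14,1),(15,15)), ((14,11),(10,13)), ((14,11),(12,15)), ((14,11),(13,13)), ((15,15),(0,13)), ((15,15),(14,1))]"


definition q :: "nat \<Rightarrow> real^2" where "q x = vector [qc1 x, qc2 x]"
definition ninf :: "real^2 \<Rightarrow> real" where "ninf p = max \<bar>p$1\<bar> \<bar>p$2\<bar>"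
definition oseg :: "real^2 \<Rightarrow> real^2 \<Rightarrow> (real^2) set" where
  "oseg a b = {(1 - t) *\<^sub>R a + t *\<^sub>R b | t. 0 < t \<and> t < 1}"

lemma vec2_eq: "(p::real^2) = p' \<longleftrightarrow> p$1 = p'$1 \<and> p$2 = p'$2"
  by (simp add: vec_eq_iff forall_2)

lemma oseg_coord: "p \<in> oseg a b \<longleftrightarrow> (\<exists>t. 0 < t \<and> t < 1 \<and> p$1 = (1-t)*a$1 + t*b$1 \<and> p$2 = (1-t)*a$2 + t*b$2)"
  unfolding oseg_def by (auto simp: vec2_eq)

lemma q_comp [simp]: "q x $ 1 = qc1 x" "q x $ 2 = qc2 x"
  by (simp_all add: q_def)

lemma less16: "(x::nat) < 16 \<Longrightarrow> x = 0 \<or> x = 1 \<or> x = 2 \<or> x = 3 \<or> x = 4 \<or> x = 5 \<or> x = 6 \<or> x = 7 \<or> x = 8 \<or> x = 9 \<or> x = 10 \<or> x = 11 \<or> x = 12 \<or> x = 13 \<or> x = 14 \<or> x = 15"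
  by (simp add: less_Suc_eq numeral_eq_Suc)

lemma C3c:
  assumes "(x,x') \<in> set GD" "(z,z') \<in> set GD" "(x,x') \<noteq> (z,z')" "((x,x'),(z,z')) \<notin> set CRL"
    "0 < s" "s < 1" "0 < t" "t < 1"
    "(1-s)*qc1 x + s*(3*qc1 x') = (1-t)*qc1 z + t*(3*qc1 z')"
    "(1-s)*qc2 x + s*(3*qc2 x') = (1-t)*qc2 z + t*(3*qc2 z')"
  shows False
  using assms unfolding GD_def CRL_def
  apply (simp only: set_simps insert_iff empty_iff prod.inject)
  apply (elim disjE conjE)
  apply (simp_all add: qc1_def qc2_def)
  done

lemma C3:
  assumes "(x,x') \<in> set GD" "(z,z') \<in> set GD" "(x,x') \<noteq> (z,z')" "((x,x'),(z,z')) \<notin> set CRL"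
    "p \<in> oseg (q x) (3 *\<^sub>R q x')" "p \<in> oseg (q z) (3 *\<^sub>R q z')"
  shows False
proof -
  from assms(5) obtain s where s: "0 < s" "s < 1" "p$1 = (1-s)*qc1 x + s*(3*qc1 x')" "p$2 = (1-s)*qc2 x + s*(3*qc2 x')"
    by (auto simp: oseg_coord)
  from assms(6) obtain t where t: "0 < t" "t < 1" "p$1 = (1-t)*qc1 z + t*(3*qc1 z')" "p$2 = (1-t)*qc2 z + t*(3*qc2 z')"
    by (auto simp: oseg_coord)
  show False using C3c[OF assms(1-4) s(1,2) t(1,2)] s t by simp
qed

lemma C1c:
  assumes "(x,x') \<in> set HD" "(z,z') \<in> set HD" "(x,x') \<noteq> (z,z')"
    "0 < s" "s < 1" "0 < t" "t < 1"
    "(1-s)*qc1 x + s*qc1 x' = (1-t)*qc1 z + t*qc1 z'"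
    "(1-s)*qc2 x + s*qc2 x' = (1-t)*qc2 z + t*qc2 z'"
  shows False
  using assms unfolding HD_def
  apply (simp only: set_simps insert_iff empty_iff prod.inject)
  apply (elim disjE conjE)
  apply (simp_all add: qc1_def qc2_def)
  done

lemma C1:
  assumes "(x,x') \<in> set HD" "(z,z') \<in> set HD" "(x,x') \<noteq> (z,z')"
    "p \<in> oseg (q x) (q x')" "p \<in> oseg (q z) (q z')"
  shows False
proof -
  from assms(4) obtain s where s: "0 < s" "s < 1" "p$1 = (1-s)*qc1 x + s*qc1 x'" "p$2 = (1-s)*qc2 x + s*qc2 x'"
    by (auto simp: oseg_coord)
  from assms(5) obtain t where t: "0 < t" "t < 1" "p$1 = (1-t)*qc1 z + t*qc1 z'" "p$2 = (1-t)*qc2 z + t*qc2 z'"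
    by (auto simp: oseg_coord)
  show False using C1c[OF assms(1-3) s(1,2) t(1,2)] s t by simp
qed

lemma C2c:
  assumes "(x,x') \<in> set HD" "z < 16" "0 < s" "s < 1"
    "(1-s)*qc1 x + s*qc1 x' = qc1 z"
    "(1-s)*qc2 x + s*qc2 x' = qc2 z"
  shows False
proof -
  have "z = 0 \<or> z = 1 \<or> z = 2 \<or> z = 3 \<or> z = 4 \<or> z = 5 \<or> z = 6 \<or> z = 7 \<or> z = 8 \<or> z = 9 \<or> z = 10 \<or> z = 11 \<or> z = 12 \<or> z = 13 \<or> z = 14 \<or> z = 15" using assms(2) by (rule less16)
  then show False using assms unfolding HD_def
    apply (simp only: set_simps insert_iff empty_iff prod.inject)
    apply (elim disjE conjE)
    apply (simp_all add: qc1_def qc2_def)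
    done
qed

lemma C2:
  assumes "(x,x') \<in> set HD" "z < 16" "q z \<in> oseg (q x) (q x')"
  shows False
proof -
  from assms(3) obtain s where s: "0 < s" "s < 1" "qc1 z = (1-s)*qc1 x + s*qc1 x'" "qc2 z = (1-s)*qc2 x + s*qc2 x'"
    by (auto simp: oseg_coord)
  show False using C2c[OF assms(1,2) s(1,2)] s by simp
qed

lemma C5ac:
  assumes "(x,x') \<in> set HD" "0 < s" "s < 1"
  shows "((1-s)*qc1 x + s*qc1 x' = 4 \<or> -((1-s)*qc1 x + s*qc1 x') = 4 \<or>
          (1-s)*qc2 x + s*qc2 x' = 4 \<or> -((1-s)*qc2 x + s*qc2 x') = 4) \<and>
         -4 \<le> (1-s)*qc1 x + s*qc1 x' \<and> (1-s)*qc1 x + s*qc1 x' \<le> 4 \<and>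
         -4 \<le> (1-s)*qc2 x + s*qc2 x' \<and> (1-s)*qc2 x + s*qc2 x' \<le> 4"
  using assms unfolding HD_def
  apply (simp only: set_simps insert_iff empty_iff prod.inject)
  apply (elim disjE conjE)
  apply (simp_all add: qc1_def qc2_def)
  done

lemma C5bc:
  assumes "(x,x') \<in> set GD" "0 < s" "s < 1"
  shows "(4 < (1-s)*qc1 x + s*(3*qc1 x') \<or> 4 < -((1-s)*qc1 x + s*(3*qc1 x')) \<or>
         4 < (1-s)*qc2 x + s*(3*qc2 x') \<or> 4 < -((1-s)*qc2 x + s*(3*qc2 x'))) \<and>
         -12 < (1-s)*qc1 x + s*(3*qc1 x') \<and> (1-s)*qc1 x + s*(3*qc1 x') < 12 \<and>
         -12 < (1-s)*qc2 x + s*(3*qc2 x') \<and> (1-s)*qc2 x + s*(3*qc2 x') < 12"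
  using assms unfolding GD_def
  apply (simp only: set_simps insert_iff empty_iff prod.inject)
  apply (elim disjE conjE)
  apply (simp_all add: qc1_def qc2_def)
  done

lemma ninf_eq4: "(A = 4 \<or> -A = 4 \<or> B = 4 \<or> -B = 4) \<and> -4 \<le> A \<and> A \<le> 4 \<and> -4 \<le> B \<and> B \<le> 4
   \<Longrightarrow> max \<bar>A\<bar> \<bar>B\<bar> = (4::real)"
  by (auto simp: max_def abs_if)

lemma ninf_412: "(4 < A \<or> 4 < -A \<or> 4 < B \<or> 4 < -B) \<and> -12 < A \<and> A < 12 \<and> -12 < B \<and> B < 12
   \<Longrightarrow> 4 < max \<bar>A\<bar> \<bar>B\<bar> \<and> max \<bar>A\<bar> \<bar>B\<bar> < (12::real)"
  by (auto simp: max_def abs_if)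

lemma C5a:
  assumes "(x,x') \<in> set HD" "p \<in> oseg (q x) (q x')"
  shows "ninf p = 4"
proof -
  from assms(2) obtain s where s: "0 < s" "s < 1" "p$1 = (1-s)*qc1 x + s*qc1 x'" "p$2 = (1-s)*qc2 x + s*qc2 x'"
    by (auto simp: oseg_coord)
  show ?thesis using ninf_eq4[OF C5ac[OF assms(1) s(1,2)]] s by (simp add: ninf_def)
qed

lemma C5b:
  assumes "(x,x') \<in> set GD" "p \<in> oseg (q x) (3 *\<^sub>R q x')"
  shows "4 < ninf p \<and> ninf p < 12"
proof -
  from assms(2) obtain s where s: "0 < s" "s < 1" "p$1 = (1-s)*qc1 x + s*(3*qc1 x')" "p$2 = (1-s)*qc2 x + s*(3*qc2 x')"
    by (auto simp: oseg_coord)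
  show ?thesis using ninf_412[OF C5bc[OF assms(1) s(1,2)]] s by (simp add: ninf_def)
qed

lemma C6c: assumes "x < 16" "z < 16" "qc1 x = qc1 z" "qc2 x = qc2 z" shows "x = z"
proof -
  have "x = 0 \<or> x = 1 \<or> x = 2 \<or> x = 3 \<or> x = 4 \<or> x = 5 \<or> x = 6 \<or> x = 7 \<or> x = 8 \<or> x = 9 \<or> x = 10 \<or> x = 11 \<or> x = 12 \<or> x = 13 \<or> x = 14 \<or> x = 15" using assms(1) by (rule less16)
  moreover have "z = 0 \<or> z = 1 \<or> z = 2 \<or> z = 3 \<or> z = 4 \<or> z = 5 \<or> z = 6 \<or> z = 7 \<or> z = 8 \<or> z = 9 \<or> z = 10 \<or> z = 11 \<or> z = 12 \<or> z = 13 \<or> z = 14 \<or> z = 15" using assms(2) by (rule less16)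
  ultimately show ?thesis using assms(3,4)
    apply (elim disjE)
    apply (simp_all add: qc1_def qc2_def)
    done
qed

lemma C6: "x < 16 \<Longrightarrow> z < 16 \<Longrightarrow> q x = q z \<Longrightarrow> x = z"
  using C6c by (simp add: vec2_eq)

lemma C6n: assumes "x < 16" shows "ninf (q x) = 4"
proof -
  have "x = 0 \<or> x = 1 \<or> x = 2 \<or> x = 3 \<or> x = 4 \<or> x = 5 \<or> x = 6 \<or> x = 7 \<or> x = 8 \<or> x = 9 \<or> x = 10 \<or> x = 11 \<or> x = 12 \<or> x = 13 \<or> x = 14 \<or> x = 15" using assms by (rule less16)
  then show ?thesis
    apply (elim disjE)
    apply (simp_all add: ninf_def qc1_def qc2_def)
    done
qed

lemma C4c: "((x,x'),(z,z')) \<in> set CRL \<Longrightarrow>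
   (3*qc1 x' - qc1 x)*(3*qc2 z' - qc2 z) - (3*qc2 x' - qc2 x)*(3*qc1 z' - qc1 z) \<noteq> 0"
  unfolding CRL_def
  apply (simp only: set_simps insert_iff empty_iff prod.inject)
  apply (elim disjE conjE)
  apply (simp_all add: qc1_def qc2_def)
  done

lemma C7: "d \<in> set GD \<Longrightarrow> length (filter (\<lambda>p. fst p = d) CRL) \<le> 3"
  unfolding GD_def CRL_def
  apply (simp only: set_simps insert_iff empty_iff)
  apply (elim disjE)
  apply simp_all
  done

lemma HD_facts: "(x,x') \<in> set HD \<Longrightarrow> x < 16 \<and> x' < 16 \<and> x \<noteq> x' \<and> (x',x) \<notin> set HD"
  unfolding HD_def
  apply (simp only: set_simps insert_iff empty_iff prod.inject)
  apply (elim disjE conjE)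
  apply simp_all
  done

lemma GD_facts: "(x,x') \<in> set GD \<Longrightarrow> x < 16 \<and> x' < 16"
  unfolding GD_def
  apply (simp only: set_simps insert_iff empty_iff prod.inject)
  apply (elim disjE conjE)
  apply simp_all
  done

lemma CRL_GD: "((x,x'),(z,z')) \<in> set CRL \<Longrightarrow> (z,z') \<in> set GD"
  unfolding CRL_def
  apply (simp only: set_simps insert_iff empty_iff prod.inject)
  apply (elim disjE conjE)
  apply (simp_all add: GD_def)
  done

lemma HD_card: "card (set HD) = 16" unfolding HD_def by simp
lemma GD_card: "card (set GD) = 24" unfolding GD_def by simp

definition nb :: "nat \<Rightarrow> (int \<times> nat) list" where
 "nb x = map (\<lambda>d. (0, snd d)) (filter (\<lambda>d. fst d = x) HD) @ map (\<lambda>d. (0, fst d)) (filter (\<lambda>d. snd d = x) HD)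
       @ map (\<lambda>d. (1, snd d)) (filter (\<lambda>d. fst d = x) GD) @ map (\<lambda>d. (-1, fst d)) (filter (\<lambda>d. snd d = x) GD)"

lemma noT_all: "\<forall>x\<in>set [0..<16]. \<forall>(a,x1)\<in>set (nb x). \<forall>(b,x2)\<in>set (nb x1). (a+b,x2) \<notin> set (nb x)"
  by code_simp

lemma noQ_all: "\<forall>x\<in>set [0..<16]. \<forall>(a,x1)\<in>set (nb x). \<forall>(b,x2)\<in>set (nb x1). \<forall>(c,x3)\<in>set (nb x2).
    (a+b,x2) \<noteq> (0,x) \<longrightarrow> (a+b+c,x3) \<noteq> (a,x1) \<longrightarrow> (a+b+c,x3) \<notin> set (nb x)"
  by code_simp

lemma nb_mem1: assumes "(x,x') \<in> set HD" shows "(0,x') \<in> set (nb x) \<and> (0,x) \<in> set (nb x')"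
proof -
  have a: "(0::int,x') \<in> (\<lambda>d. (0, snd d)) ` {d \<in> set HD. fst d = x}" using assms by (intro image_eqI[where x="(x,x')"]) auto
  have b: "(0::int,x) \<in> (\<lambda>d. (0, fst d)) ` {d \<in> set HD. snd d = x'}" using assms by (intro image_eqI[where x="(x,x')"]) auto
  show ?thesis using a b unfolding nb_def set_append set_map set_filter by blast
qed
lemma nb_mem2: assumes "(x,x') \<in> set GD" shows "(1,x') \<in> set (nb x) \<and> (-1,x) \<in> set (nb x')"
proof -
  have a: "(1::int,x') \<in> (\<lambda>d. (1, snd d)) ` {d \<in> set GD. fst d = x}" using assms by (intro image_eqI[where x="(x,x')"]) auto
  have b: "(-1::int,x) \<in> (\<lambda>d. (-1, fst d)) ` {d \<in> set GD. snd d = x'}" using assms by (intro image_eqI[where x="(x,x')"]) auto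
  show ?thesis using a b unfolding nb_def set_append set_map set_filter by blast
qed
definition hedge :: "nat \<Rightarrow> nat \<times> nat \<Rightarrow> nat set" where
  "hedge y d = {16*y + fst d, 16*y + snd d}"
definition gedge :: "nat \<Rightarrow> nat \<times> nat \<Rightarrow> nat set" where
  "gedge y d = {16*y + fst d, 16*(y+1) + snd d}"
definition EH :: "nat \<Rightarrow> nat set set" where "EH R = {hedge y d | y d. y < R \<and> d \<in> set HD}"
definition EG :: "nat \<Rightarrow> nat set set" where "EG R = {gedge y d | y d. y + 1 < R \<and> d \<in> set GD}"
definition EE :: "nat \<Rightarrow> nat set set" where "EE R = EH R \<union> EG R"

lemma eq16: assumes "(a::nat) < 16" "b < 16" "16*y + a = 16*y' + b" shows "y = y' \<and> a = b"
proof -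
  have "(16*y + a) div 16 = y" "(16*y' + b) div 16 = y'" using assms(1,2) by simp_all
  then have "y = y'" using assms(3) by metis
  then show ?thesis using assms(3) by simp
qed

lemma dm16: "(x::nat) < 16 \<Longrightarrow> (16*y + x) div 16 = y \<and> (16*y+x) mod 16 = x"
  by simp

lemma vdecomp: "(v::nat) = 16 * (v div 16) + v mod 16" by simp

lemma adj_nb:
  assumes "{u,v} \<in> EE R"
  shows "(int (v div 16) - int (u div 16), v mod 16) \<in> set (nb (u mod 16))"
proof -
  from assms consider (h) y x x' where "{u,v} = hedge y (x,x')" "(x,x') \<in> set HD"
    | (g) y x x' where "{u,v} = gedge y (x,x')" "(x,x') \<in> set GD"
    unfolding EE_def EH_def EG_def by auto
  then show ?thesis
  proof cases
    case h
    have f: "x < 16" "x' < 16" using HD_facts[OF h(2)] by auto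
    from h(1) have "(u = 16*y+x \<and> v = 16*y+x') \<or> (u = 16*y+x' \<and> v = 16*y+x)"
      unfolding hedge_def by (auto simp: doubleton_eq_iff)
    then show ?thesis
    proof
      assume a: "u = 16*y+x \<and> v = 16*y+x'"
      then have "u div 16 = y" "u mod 16 = x" "v div 16 = y" "v mod 16 = x'" using dm16 f by auto
      then show ?thesis using nb_mem1[OF h(2)] by simp
    next
      assume a: "u = 16*y+x' \<and> v = 16*y+x"
      then have "u div 16 = y" "u mod 16 = x'" "v div 16 = y" "v mod 16 = x" using dm16 f by auto
      then show ?thesis using nb_mem1[OF h(2)] by simp
    qed
  next
    case g
    have f: "x < 16" "x' < 16" using GD_facts[OF g(2)] by auto
    from g(1) have "(u = 16*y+x \<and> v = 16*(y+1)+x') \<or> (u = 16*(y+1)+x' \<and> v = 16*y+x)"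
      unfolding gedge_def by (auto simp: doubleton_eq_iff)
    then show ?thesis
    proof
      assume a: "u = 16*y+x \<and> v = 16*(y+1)+x'"
      then have "u div 16 = y" "u mod 16 = x" "v div 16 = y+1" "v mod 16 = x'" using a dm16[OF f(1), of y] dm16[OF f(2), of "y+1"] by simp_all
      then show ?thesis using nb_mem2[OF g(2)] by simp
    next
      assume a: "u = 16*(y+1)+x' \<and> v = 16*y+x"
      then have "u div 16 = y+1" "u mod 16 = x'" "v div 16 = y" "v mod 16 = x" using a dm16[OF f(1), of y] dm16[OF f(2), of "y+1"] by simp_all
      then show ?thesis using nb_mem2[OF g(2)] by simp
    qed
  qed
qed

lemma adj_nb': "{u,v} \<in> EE R \<Longrightarrow> (int (u div 16) - int (v div 16), u mod 16) \<in> set (nb (v mod 16))"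
  using adj_nb[of v u R] by (simp add: insert_commute)

lemma vert_eq: assumes "int (u div 16) = int (v div 16)" "u mod 16 = v mod 16" shows "u = (v::nat)"
proof -
  have h: "u div 16 = v div 16" using assms(1) by simp
  show ?thesis using vdecomp[of u] vdecomp[of v] h assms(2) by linarith
qed

lemma no3: "\<not> has_cycle_of_length V (EE R) 3"
proof
  assume "has_cycle_of_length V (EE R) 3"
  then obtain c where inj: "inj_on c {..<3::nat}" and E: "\<forall>i<(3::nat). {c i, c ((i+1) mod 3)} \<in> EE R"
    unfolding has_cycle_of_length_def by blast
  have a: "((0::nat)+1) mod 3 = 1" "((1::nat)+1) mod 3 = 2" "((2::nat)+1) mod 3 = 0" by simp_all
  have e0: "{c 0, c 1} \<in> EE R" using E[rule_format, of 0] unfolding a by simp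
  have e1: "{c 1, c 2} \<in> EE R" using E[rule_format, of 1] unfolding a by simp
  have e2: "{c 2, c 0} \<in> EE R" using E[rule_format, of 2] unfolding a by simp
  define r where "r i = int (c i div 16)" for i
  define k where "k i = c i mod 16" for i
  have m0: "(r 1 - r 0, k 1) \<in> set (nb (k 0))" using adj_nb[OF e0] by (simp add: r_def k_def)
  have m1: "(r 2 - r 1, k 2) \<in> set (nb (k 1))" using adj_nb[OF e1] by (simp add: r_def k_def)
  have m2: "(r 2 - r 0, k 2) \<in> set (nb (k 0))" using adj_nb'[OF e2] by (simp add: r_def k_def)
  have "k 0 \<in> set [0..<16]" by (simp add: k_def)
  then have H: "\<forall>(a,x1)\<in>set (nb (k 0)). \<forall>(b,x2)\<in>set (nb x1). (a+b,x2) \<notin> set (nb (k 0))"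
    using noT_all by blast
  have H1: "\<forall>(b,x2)\<in>set (nb (k 1)). (r 1 - r 0 + b, x2) \<notin> set (nb (k 0))" using bspec[OF H m0] by simp
  have "(r 1 - r 0 + (r 2 - r 1), k 2) \<notin> set (nb (k 0))" using bspec[OF H1 m1] by simp
  then show False using m2 by simp
qed

lemma no4: "\<not> has_cycle_of_length V (EE R) 4"
proof
  assume "has_cycle_of_length V (EE R) 4"
  then obtain c where inj: "inj_on c {..<4::nat}" and E: "\<forall>i<(4::nat). {c i, c ((i+1) mod 4)} \<in> EE R"
    unfolding has_cycle_of_length_def by blast
  have a: "((0::nat)+1) mod 4 = 1" "((1::nat)+1) mod 4 = 2" "((2::nat)+1) mod 4 = 3" "((3::nat)+1) mod 4 = 0" by simp_all
  have e0: "{c 0, c 1} \<in> EE R" using E[rule_format, of 0] unfolding a by simp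
  have e1: "{c 1, c 2} \<in> EE R" using E[rule_format, of 1] unfolding a by simp
  have e2: "{c 2, c 3} \<in> EE R" using E[rule_format, of 2] unfolding a by simp
  have e3: "{c 3, c 0} \<in> EE R" using E[rule_format, of 3] unfolding a by simp
  have d02: "c 0 \<noteq> c 2" using inj_onD[OF inj, of 0 2] by auto
  have d13: "c 1 \<noteq> c 3" using inj_onD[OF inj, of 1 3] by auto
  define r where "r i = int (c i div 16)" for i
  define k where "k i = c i mod 16" for i
  have m0: "(r 1 - r 0, k 1) \<in> set (nb (k 0))" using adj_nb[OF e0] by (simp add: r_def k_def)
  have m1: "(r 2 - r 1, k 2) \<in> set (nb (k 1))" using adj_nb[OF e1] by (simp add: r_def k_def)
  have m2: "(r 3 - r 2, k 3) \<in> set (nb (k 2))" using adj_nb[OF e2] by (simp add: r_def k_def)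
  have m3: "(r 3 - r 0, k 3) \<in> set (nb (k 0))" using adj_nb'[OF e3] by (simp add: r_def k_def)
  have n02: "(r 1 - r 0 + (r 2 - r 1), k 2) \<noteq> (0, k 0)"
  proof
    assume "(r 1 - r 0 + (r 2 - r 1), k 2) = (0, k 0)"
    then have "int (c 2 div 16) = int (c 0 div 16)" "c 2 mod 16 = c 0 mod 16" by (auto simp: r_def k_def)
    then have "c 2 = c 0" by (rule vert_eq)
    then show False using d02 by simp
  qed
  have n13: "(r 1 - r 0 + (r 2 - r 1) + (r 3 - r 2), k 3) \<noteq> (r 1 - r 0, k 1)"
  proof
    assume "(r 1 - r 0 + (r 2 - r 1) + (r 3 - r 2), k 3) = (r 1 - r 0, k 1)"
    then have "int (c 3 div 16) = int (c 1 div 16)" "c 3 mod 16 = c 1 mod 16" by (auto simp: r_def k_def)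
    then have "c 3 = c 1" by (rule vert_eq)
    then show False using d13 by simp
  qed
  have "k 0 \<in> set [0..<16]" by (simp add: k_def)
  then have H: "\<forall>(a,x1)\<in>set (nb (k 0)). \<forall>(b,x2)\<in>set (nb x1). \<forall>(c,x3)\<in>set (nb x2).
    (a+b,x2) \<noteq> (0,k 0) \<longrightarrow> (a+b+c,x3) \<noteq> (a,x1) \<longrightarrow> (a+b+c,x3) \<notin> set (nb (k 0))"
    using noQ_all by blast
  note H1 = bspec[OF H m0, unfolded prod.case]
  note H2 = bspec[OF H1 m1, unfolded prod.case]
  note H3 = bspec[OF H2 m2, unfolded prod.case]
  have eq: "r 1 - r 0 + (r 2 - r 1) + (r 3 - r 2) = r 3 - r 0" by linarith
  have "(r 1 - r 0 + (r 2 - r 1) + (r 3 - r 2), k 3) \<notin> set (nb (k 0))"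
    using H3 n02 n13 by blast
  then have "(r 3 - r 0, k 3) \<notin> set (nb (k 0))" unfolding eq .
  then show False using m3 by simp
qed

definition pos :: "nat \<Rightarrow> nat \<Rightarrow> real^2" where
  "pos R v = (if v < 16*R then (3::real)^(v div 16) *\<^sub>R q (v mod 16) else vector [0, 1 / (real v + 2)])"
definition gam :: "nat \<Rightarrow> nat set \<Rightarrow> real \<Rightarrow> real^2" where
  "gam R e = linepath (pos R (Min e)) (pos R (Max e))"

lemma ci_lp: "curve_interior (linepath a b) = oseg a b"
  unfolding curve_interior_def oseg_def linepath_def by auto

lemma oseg_sub: "oseg a b \<subseteq> oseg b a"
proof
  fix p assume "p \<in> oseg a b"
  then obtain t where t: "0<t" "t<1" "p = (1-t) *\<^sub>R a + t *\<^sub>R b" unfolding oseg_def by auto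
  have "p = (1 - (1-t)) *\<^sub>R b + (1-t) *\<^sub>R a" using t by (simp add: algebra_simps)
  moreover have "0 < 1-t" "1-t < 1" using t by auto
  ultimately show "p \<in> oseg b a" unfolding oseg_def by blast
qed

lemma oseg_sym: "oseg a b = oseg b a" using oseg_sub by blast

lemma oseg_scale: "oseg (c *\<^sub>R a) (c *\<^sub>R b) = (\<lambda>p. c *\<^sub>R p) ` oseg a b"
proof -
  have eq: "(1 - t) *\<^sub>R (c *\<^sub>R a) + t *\<^sub>R (c *\<^sub>R b) = c *\<^sub>R ((1 - t) *\<^sub>R a + t *\<^sub>R b)" for t
    by (simp add: algebra_simps)
  show ?thesis
  proof
    show "oseg (c *\<^sub>R a) (c *\<^sub>R b) \<subseteq> (\<lambda>p. c *\<^sub>R p) ` oseg a b"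
    proof
      fix p assume "p \<in> oseg (c *\<^sub>R a) (c *\<^sub>R b)"
      then obtain t where t: "0 < t" "t < 1" "p = (1 - t) *\<^sub>R (c *\<^sub>R a) + t *\<^sub>R (c *\<^sub>R b)"
        unfolding oseg_def by auto
      have "(1 - t) *\<^sub>R a + t *\<^sub>R b \<in> oseg a b" unfolding oseg_def using t(1,2) by blast
      then show "p \<in> (\<lambda>p. c *\<^sub>R p) ` oseg a b" using t(3) eq by auto
    qed
  next
    show "(\<lambda>p. c *\<^sub>R p) ` oseg a b \<subseteq> oseg (c *\<^sub>R a) (c *\<^sub>R b)"
    proof
      fix p assume "p \<in> (\<lambda>p. c *\<^sub>R p) ` oseg a b"
      then obtain t where t: "0 < t" "t < 1" "p = c *\<^sub>R ((1 - t) *\<^sub>R a + t *\<^sub>R b)"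
        unfolding oseg_def by auto
      have "p = (1 - t) *\<^sub>R (c *\<^sub>R a) + t *\<^sub>R (c *\<^sub>R b)" by (metis eq t(3))
      then show "p \<in> oseg (c *\<^sub>R a) (c *\<^sub>R b)" unfolding oseg_def using t(1,2) by blast
    qed
  qed
qed

lemma gam_ci: "u \<noteq> v \<Longrightarrow> curve_interior (gam R {u,v}) = oseg (pos R u) (pos R v)"
  by (cases "u < v") (auto simp: gam_def ci_lp min_def max_def oseg_sym)

lemma pos_ring: "y < R \<Longrightarrow> x < 16 \<Longrightarrow> pos R (16*y+x) = 3^y *\<^sub>R q x"
proof -
  assume a: "y < R" "x < 16"
  then have "16*y+x < 16*R" by linarith
  then show ?thesis using a by (simp add: pos_def)
qed

lemma ci_h:
  assumes "y < R" "(x,x') \<in> set HD"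
  shows "curve_interior (gam R (hedge y (x,x'))) = (\<lambda>p. 3^y *\<^sub>R p) ` oseg (q x) (q x')"
proof -
  have f: "x < 16" "x' < 16" "x \<noteq> x'" using HD_facts[OF assms(2)] by auto
  have "curve_interior (gam R (hedge y (x,x'))) = oseg (pos R (16*y+x)) (pos R (16*y+x'))"
    unfolding hedge_def fst_conv snd_conv using f by (intro gam_ci) simp
  also have "\<dots> = oseg (3^y *\<^sub>R q x) (3^y *\<^sub>R q x')" using pos_ring assms(1) f by simp
  finally show ?thesis by (simp add: oseg_scale)
qed

lemma ci_g:
  assumes "y + 1 < R" "(x,x') \<in> set GD"
  shows "curve_interior (gam R (gedge y (x,x'))) = (\<lambda>p. 3^y *\<^sub>R p) ` oseg (q x) (3 *\<^sub>R q x')"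
proof -
  have f: "x < 16" "x' < 16" using GD_facts[OF assms(2)] by auto
  have p1: "pos R (16*y+x) = 3^y *\<^sub>R q x" using pos_ring[of y R x] assms(1) f by simp
  have "pos R (16*(y+1)+x') = 3^(y+1) *\<^sub>R q x'" using pos_ring[of "y+1" R x'] assms(1) f by simp
  also have "\<dots> = (3::real)^y *\<^sub>R (3 *\<^sub>R q x')" by (simp add: mult.commute)
  finally have p2: "pos R (16*(y+1)+x') = (3::real)^y *\<^sub>R (3 *\<^sub>R q x')" .
  have "curve_interior (gam R (gedge y (x,x'))) = oseg (pos R (16*y+x)) (pos R (16*(y+1)+x'))"
    unfolding gedge_def fst_conv snd_conv using f by (intro gam_ci) simp
  also have "\<dots> = oseg (3^y *\<^sub>R q x) (3^y *\<^sub>R (3 *\<^sub>R q x'))" unfolding p1 p2 ..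
  finally show ?thesis by (simp only: oseg_scale)
qed

lemma ninf_scale: "0 \<le> c \<Longrightarrow> ninf (c *\<^sub>R p) = c * ninf p"
  by (simp add: ninf_def abs_mult max_mult_distrib_left)

lemma lev_h:
  assumes "y < R" "(x,x') \<in> set HD" "p \<in> curve_interior (gam R (hedge y (x,x')))"
  shows "\<exists>p0. p0 \<in> oseg (q x) (q x') \<and> p = 3^y *\<^sub>R p0 \<and> ninf p = 4*3^y"
proof -
  from assms(3) obtain p0 where p0: "p0 \<in> oseg (q x) (q x')" "p = 3^y *\<^sub>R p0"
    using ci_h[OF assms(1,2)] by auto
  have "ninf p = 3^y * ninf p0" using p0(2) ninf_scale by simp
  then show ?thesis using p0 C5a[OF assms(2) p0(1)] by auto
qed

lemma lev_g:
  assumes "y + 1 < R" "(x,x') \<in> set GD" "p \<in> curve_interior (gam R (gedge y (x,x')))"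
  shows "\<exists>p0. p0 \<in> oseg (q x) (3 *\<^sub>R q x') \<and> p = 3^y *\<^sub>R p0 \<and> 4*3^y < ninf p \<and> ninf p < 12*3^y"
proof -
  from assms(3) obtain p0 where p0: "p0 \<in> oseg (q x) (3 *\<^sub>R q x')" "p = 3^y *\<^sub>R p0"
    using ci_g[OF assms(1,2)] by auto
  have "ninf p = 3^y * ninf p0" using p0(2) ninf_scale by simp
  then show ?thesis using p0 C5b[OF assms(2) p0(1)] by auto
qed

lemma ninf_pos: "v < 16*R \<Longrightarrow> ninf (pos R v) = 4*3^(v div 16)"
  by (simp add: pos_def ninf_scale C6n)

lemma ninf_pos_iso: "\<not> v < 16*R \<Longrightarrow> ninf (pos R v) < 4"
proof -
  assume "\<not> v < 16*R"
  moreover have "1 / (real v + 2) < 4" by (simp add: field_simps)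
  moreover have "0 \<le> 1 / (real v + 2)" by simp
  ultimately show ?thesis by (simp add: pos_def ninf_def)
qed

lemma pw_between: "4*3^b < (4::real)*3^a \<Longrightarrow> (4::real)*3^a < 12*3^b \<Longrightarrow> False"
proof -
  assume h: "4*3^b < (4::real)*3^a" "(4::real)*3^a < 12*3^b"
  then have "(3::real)^b < 3^a" by simp
  then have "b < a" by (simp add: power_strict_increasing_iff)
  then have "(3::real)^(b+1) \<le> 3^a" by (intro power_increasing) auto
  then show False using h by simp
qed

lemma pw_lev: "4*3^a < (t::real) \<Longrightarrow> t < 12*3^a \<Longrightarrow> 4*3^b < t \<Longrightarrow> t < 12*3^b \<Longrightarrow> a = b"
proof -
  assume h: "4*3^a < (t::real)" "t < 12*3^a" "4*3^b < t" "t < 12*3^b"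
  have *: False if "i < j" "4*3^i < (t::real)" "t < 12*3^i" "4*3^j < t" "t < 12*3^j" for i j
  proof -
    have "(3::real)^(i+1) \<le> 3^j" using that(1) by (intro power_increasing) auto
    then show False using that by simp
  qed
  show "a = b" using *[of a b] *[of b a] h by (cases "a < b"; cases "b < a") auto
qed

lemma edge_cases:
  assumes "e \<in> EE R"
  obtains (h) y x x' where "y < R" "(x,x') \<in> set HD" "e = hedge y (x,x')"
    | (g) y x x' where "y + 1 < R" "(x,x') \<in> set GD" "e = gedge y (x,x')"
  using assms unfolding EE_def EH_def EG_def by auto

lemma cross_h:
  assumes "y < R" "(x,x') \<in> set HD" "f \<in> EE R" "f \<noteq> hedge y (x,x')"
    "p \<in> curve_interior (gam R (hedge y (x,x')))" "p \<in> curve_interior (gam R f)"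
  shows False
proof -
  obtain p0 where p0: "p0 \<in> oseg (q x) (q x')" "p = 3^y *\<^sub>R p0" "ninf p = 4*3^y"
    using lev_h[OF assms(1,2,5)] by auto
  from assms(3) show False
  proof (cases rule: edge_cases)
    case (h y' z z')
    obtain p1 where p1: "p1 \<in> oseg (q z) (q z')" "p = 3^y' *\<^sub>R p1" "ninf p = 4*3^y'"
      using lev_h[OF h(1,2)] assms(6) h(3) by auto
    have "y = y'" using p0(3) p1(3) by simp
    then have "p0 = p1" using p0(2) p1(2) by simp
    moreover have "(x,x') \<noteq> (z,z')" using assms(4) h(3) \<open>y = y'\<close> by auto
    ultimately show False using C1[OF assms(2) h(2)] p0(1) p1(1) by blast
  next
    case (g y' z z')
    obtain p1 where p1: "4*3^y' < ninf p" "ninf p < 12*3^y'"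
      using lev_g[OF g(1,2)] assms(6) g(3) by auto
    show False using pw_between[of y' y] p0(3) p1 by simp
  qed
qed

lemma cross_g:
  assumes "y + 1 < R" "(x,x') \<in> set GD" "f \<in> EE R" "f \<noteq> gedge y (x,x')"
    "p \<in> curve_interior (gam R (gedge y (x,x')))" "p \<in> curve_interior (gam R f)"
  shows "\<exists>z z'. ((x,x'),(z,z')) \<in> set CRL \<and> f = gedge y (z,z')"
proof -
  obtain p0 where p0: "p0 \<in> oseg (q x) (3 *\<^sub>R q x')" "p = 3^y *\<^sub>R p0" "4*3^y < ninf p" "ninf p < 12*3^y"
    using lev_g[OF assms(1,2,5)] by auto
  from assms(3) show ?thesis
  proof (cases rule: edge_cases)
    case (h y' z z')
    obtain p1 where p1: "ninf p = 4*3^y'"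
      using lev_h[OF h(1,2)] assms(6) h(3) by auto
    show ?thesis using pw_between[of y y'] p0(3,4) p1 by simp
  next
    case (g y' z z')
    obtain p1 where p1: "p1 \<in> oseg (q z) (3 *\<^sub>R q z')" "p = 3^y' *\<^sub>R p1" "4*3^y' < ninf p" "ninf p < 12*3^y'"
      using lev_g[OF g(1,2)] assms(6) g(3) by auto
    have "y = y'" using pw_lev p0(3,4) p1(3,4) by blast
    then have "p0 = p1" using p0(2) p1(2) by simp
    moreover have "(x,x') \<noteq> (z,z')" using assms(4) g(3) \<open>y = y'\<close> by auto
    ultimately have "((x,x'),(z,z')) \<in> set CRL" using C3[OF assms(2) g(2)] p0(1) p1(1) by blast
    then show ?thesis using g(3) \<open>y = y'\<close> by blast
  qed
qed

lemma seg_unique: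
  fixes a b c d p p' :: "real^2"
  assumes "(b$1 - a$1)*(d$2 - c$2) - (b$2 - a$2)*(d$1 - c$1) \<noteq> 0"
    "p \<in> oseg a b" "p \<in> oseg c d" "p' \<in> oseg a b" "p' \<in> oseg c d"
  shows "p = p'"
proof -
  obtain s where s: "p$1 = (1-s)*a$1 + s*b$1" "p$2 = (1-s)*a$2 + s*b$2" using assms(2) by (auto simp: oseg_coord)
  obtain t where t: "p$1 = (1-t)*c$1 + t*d$1" "p$2 = (1-t)*c$2 + t*d$2" using assms(3) by (auto simp: oseg_coord)
  obtain s' where s': "p'$1 = (1-s')*a$1 + s'*b$1" "p'$2 = (1-s')*a$2 + s'*b$2" using assms(4) by (auto simp: oseg_coord)
  obtain t' where t': "p'$1 = (1-t')*c$1 + t'*d$1" "p'$2 = (1-t')*c$2 + t'*d$2" using assms(5) by (auto simp: oseg_coord)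
  have e1: "(s-s')*(b$1-a$1) = (t-t')*(d$1-c$1)"
  proof -
    have "(s-s')*(b$1-a$1) = p$1 - p'$1" using s s' by (simp add: algebra_simps)
    also have "\<dots> = (t-t')*(d$1-c$1)" using t t' by (simp add: algebra_simps)
    finally show ?thesis .
  qed
  have e2: "(s-s')*(b$2-a$2) = (t-t')*(d$2-c$2)"
  proof -
    have "(s-s')*(b$2-a$2) = p$2 - p'$2" using s s' by (simp add: algebra_simps)
    also have "\<dots> = (t-t')*(d$2-c$2)" using t t' by (simp add: algebra_simps)
    finally show ?thesis .
  qed
  have "(s-s') * ((b$1 - a$1)*(d$2 - c$2) - (b$2 - a$2)*(d$1 - c$1))
      = ((s-s')*(b$1-a$1))*(d$2-c$2) - ((s-s')*(b$2-a$2))*(d$1-c$1)" by (simp add: algebra_simps)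
  also have "\<dots> = ((t-t')*(d$1-c$1))*(d$2-c$2) - ((t-t')*(d$2-c$2))*(d$1-c$1)" using e1 e2 by simp
  also have "\<dots> = 0" by (simp add: algebra_simps)
  finally have "s = s'" using assms(1) by simp
  then show ?thesis using s s' by (simp add: vec2_eq)
qed

lemma C4:
  assumes "((x,x'),(z,z')) \<in> set CRL"
    "p \<in> oseg (q x) (3 *\<^sub>R q x')" "p \<in> oseg (q z) (3 *\<^sub>R q z')"
    "p' \<in> oseg (q x) (3 *\<^sub>R q x')" "p' \<in> oseg (q z) (3 *\<^sub>R q z')"
  shows "p = p'"
  using seg_unique[OF _ assms(2-5)] C4c[OF assms(1)] by simp


lemma uniq_g:
  assumes "y + 1 < R" "(x,x') \<in> set GD" "((x,x'),(z,z')) \<in> set CRL"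
    "p \<in> curve_interior (gam R (gedge y (x,x')))" "p \<in> curve_interior (gam R (gedge y (z,z')))"
    "p' \<in> curve_interior (gam R (gedge y (x,x')))" "p' \<in> curve_interior (gam R (gedge y (z,z')))"
  shows "p = p'"
proof -
  have zg: "(z,z') \<in> set GD" using CRL_GD[OF assms(3)] .
  have c0: "(3::real)^y \<noteq> 0" by simp
  obtain a where a: "a \<in> oseg (q x) (3 *\<^sub>R q x')" "p = 3^y *\<^sub>R a" using ci_g[OF assms(1,2)] assms(4) by auto
  obtain b where b: "b \<in> oseg (q z) (3 *\<^sub>R q z')" "p = 3^y *\<^sub>R b" using ci_g[OF assms(1) zg] assms(5) by auto
  obtain a' where a': "a' \<in> oseg (q x) (3 *\<^sub>R q x')" "p' = 3^y *\<^sub>R a'" using ci_g[OF assms(1,2)] assms(6) by auto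
  obtain b' where b': "b' \<in> oseg (q z) (3 *\<^sub>R q z')" "p' = 3^y *\<^sub>R b'" using ci_g[OF assms(1) zg] assms(7) by auto
  have "a = b" using a(2) b(2) c0 by simp
  moreover have "a' = b'" using a'(2) b'(2) c0 by simp
  ultimately have "a = a'" using C4[OF assms(3) a(1) _ a'(1)] b(1) b'(1) by simp
  then show ?thesis using a(2) a'(2) by simp
qed

lemma novert:
  assumes "e \<in> EE R" "p \<in> curve_interior (gam R e)" shows "p \<noteq> pos R v"
proof
  assume pv: "p = pos R v"
  from assms(1) show False
  proof (cases rule: edge_cases)
    case (h y x x')
    obtain p0 where p0: "p0 \<in> oseg (q x) (q x')" "p = 3^y *\<^sub>R p0" "ninf p = 4*3^y"
      using lev_h[OF h(1,2)] assms(2) h(3) by auto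
    show False
    proof (cases "v < 16*R")
      case True
      have "ninf p = 4*3^(v div 16)" using ninf_pos[OF True] pv by simp
      then have yv: "v div 16 = y" using p0(3) by simp
      have "pos R v = 3^y *\<^sub>R q (v mod 16)" using True yv by (simp add: pos_def)
      then have "p0 = q (v mod 16)" using p0(2) pv by simp
      then show False using C2[OF h(2), of "v mod 16"] p0(1) by simp
    next
      case False
      have "(1::real) \<le> 3^y" by simp
      moreover have "ninf p < 4" using ninf_pos_iso[OF False] pv by simp
      ultimately show False using p0(3) by linarith
    qed
  next
    case (g y x x')
    obtain p0 where p0: "4*3^y < ninf p" "ninf p < 12*3^y"
      using lev_g[OF g(1,2)] assms(2) g(3) by auto
    show False
    proof (cases "v < 16*R")
      case True
      show False using ninf_pos[OF True] pv p0 pw_between[of y "v div 16"] by simp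
    next
      case False
      have "(1::real) \<le> 3^y" by simp
      moreover have "ninf p < 4" using ninf_pos_iso[OF False] pv by simp
      ultimately show False using p0 by linarith
    qed
  qed
qed

lemma pos_inj: assumes "pos R u = pos R v" shows "u = v"
proof (cases "u < 16*R")
  case u: True
  show ?thesis
  proof (cases "v < 16*R")
    case v: True
    have "ninf (pos R u) = ninf (pos R v)" using assms by simp
    then have d: "u div 16 = v div 16" using ninf_pos[OF u] ninf_pos[OF v] by simp
    have "(3::real)^(u div 16) *\<^sub>R q (u mod 16) = 3^(u div 16) *\<^sub>R q (v mod 16)"
      using assms u v d by (simp add: pos_def)
    then have "q (u mod 16) = q (v mod 16)" by simp
    then have "u mod 16 = v mod 16" using C6 by simp
    then show ?thesis using d by (metis vdecomp)
  next
    case v: False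
    have "(1::real) \<le> 3^(u div 16)" by simp
    moreover have "ninf (pos R u) < 4" using ninf_pos_iso[OF v] assms by simp
    ultimately show ?thesis using ninf_pos[OF u] by linarith
  qed
next
  case u: False
  show ?thesis
  proof (cases "v < 16*R")
    case v: True
    have "(1::real) \<le> 3^(v div 16)" by simp
    moreover have "ninf (pos R v) < 4" using ninf_pos_iso[OF u] assms by simp
    ultimately show ?thesis using ninf_pos[OF v] by linarith
  next
    case v: False
    have "pos R u $ 2 = pos R v $ 2" using assms by simp
    then have "1 / (real u + 2) = 1 / (real v + 2)" using u v by (simp add: pos_def)
    then show ?thesis by (simp add: field_simps)
  qed
qed

lemma edge_basic:
  assumes "e \<in> EE R"
  shows "\<exists>u v. e = {u,v} \<and> u \<noteq> v \<and> u < 16*R \<and> v < 16*R"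
  using assms
proof (cases rule: edge_cases)
  case (h y x x')
  have f: "x < 16" "x' < 16" "x \<noteq> x'" using HD_facts[OF h(2)] by auto
  have "16*y+x < 16*R" "16*y+x' < 16*R" using h(1) f by linarith+
  then show ?thesis using h(3) f unfolding hedge_def
    by (intro exI[of _ "16*y+x"] exI[of _ "16*y+x'"]) auto
next
  case (g y x x')
  have f: "x < 16" "x' < 16" using GD_facts[OF g(2)] by auto
  have "16*y+x < 16*R" using g(1) f by linarith
  have "16*(y+1)+x' < 16*(y+1)+16" using f by simp
  also have "\<dots> = 16*(y+2)" by simp
  also have "\<dots> \<le> 16*R" using g(1) by simp
  finally have "16*(y+1)+x' < 16*R" .
  note \<open>16*y+x < 16*R\<close> this
  then show ?thesis using g(3) f unfolding gedge_def
    by (intro exI[of _ "16*y+x"] exI[of _ "16*(y+1)+x'"]) auto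
qed

lemma subsing: "(\<forall>a\<in>A. \<forall>b\<in>A. a = b) \<Longrightarrow> finite A \<and> card A \<le> 1"
proof (cases "A = {}")
  case False
  assume h: "\<forall>a\<in>A. \<forall>b\<in>A. a = b"
  then obtain a where "a \<in> A" using False by auto
  then have "A = {a}" using h by auto
  then show ?thesis by simp
qed simp

lemma crossings:
  assumes "e \<in> EE R"
  shows "finite {(f, p). f \<in> EE R \<and> f \<noteq> e \<and> p \<in> curve_interior (gam R e) \<inter> curve_interior (gam R f)} \<and>
        card {(f, p). f \<in> EE R \<and> f \<noteq> e \<and> p \<in> curve_interior (gam R e) \<inter> curve_interior (gam R f)} \<le> 3"
  using assms
proof (cases rule: edge_cases)
  case (h y x x')
  have X: "{(f, p). f \<in> EE R \<and> f \<noteq> e \<and> p \<in> curve_interior (gam R e) \<inter> curve_interior (gam R f)} = {}"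
    using cross_h[OF h(1,2)] h(3) by blast
  show ?thesis unfolding X by simp
next
  case (g y x x')
  define S where "S = snd ` set (filter (\<lambda>p. fst p = (x,x')) CRL)"
  define A where "A f = curve_interior (gam R e) \<inter> curve_interior (gam R f)" for f
  let ?X = "{(f, p). f \<in> EE R \<and> f \<noteq> e \<and> p \<in> curve_interior (gam R e) \<inter> curve_interior (gam R f)}"
  have sub: "?X \<subseteq> (\<Union>d\<in>S. {gedge y d} \<times> A (gedge y d))"
  proof
    fix fp assume "fp \<in> ?X"
    then obtain f p where fp: "fp = (f,p)" "f \<in> EE R" "f \<noteq> e" "p \<in> curve_interior (gam R e)" "p \<in> curve_interior (gam R f)"
      by auto
    obtain z z' where zz: "((x,x'),(z,z')) \<in> set CRL" "f = gedge y (z,z')"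
      using cross_g[OF g(1,2) fp(2)] fp g(3) by blast
    have "(z,z') \<in> S" unfolding S_def using zz(1) by (force intro: rev_image_eqI)
    then show "fp \<in> (\<Union>d\<in>S. {gedge y d} \<times> A (gedge y d))" using fp zz unfolding A_def by auto
  qed
  have fin: "finite S" unfolding S_def by simp
  have one: "finite ({gedge y d} \<times> A (gedge y d)) \<and> card ({gedge y d} \<times> A (gedge y d)) \<le> 1" if "d \<in> S" for d
  proof -
    from that obtain pp where pp: "pp \<in> set CRL" "fst pp = (x,x')" "d = snd pp" unfolding S_def by auto
    then have dd: "((x,x'), d) \<in> set CRL" by (metis prod.collapse)
    obtain z z' where "d = (z,z')" by (cases d)
    then have d: "d = (z,z')" "((x,x'),(z,z')) \<in> set CRL" using dd by auto
    have "\<forall>a\<in>A (gedge y d). \<forall>b\<in>A (gedge y d). a = b"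
      unfolding A_def using uniq_g[OF g(1,2) d(2)] g(3) d(1) by blast
    from subsing[OF this] show ?thesis by (simp add: card_cartesian_product_singleton)
  qed
  have finU: "finite (\<Union>d\<in>S. {gedge y d} \<times> A (gedge y d))" using fin one by blast
  have "card ?X \<le> card (\<Union>d\<in>S. {gedge y d} \<times> A (gedge y d))" using card_mono[OF finU sub] .
  also have "\<dots> \<le> (\<Sum>d\<in>S. card ({gedge y d} \<times> A (gedge y d)))" using card_UN_le[OF fin] .
  also have "\<dots> \<le> (\<Sum>d\<in>S. 1)" using one by (intro sum_mono) auto
  also have "\<dots> = card S" by simp
  also have "\<dots> \<le> length (filter (\<lambda>p. fst p = (x,x')) CRL)"
    unfolding S_def using card_image_le card_length order_trans by blast
  also have "\<dots> \<le> 3" using C7[OF g(2)] .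
  finally show ?thesis using finite_subset[OF sub finU] by simp
qed

lemma drawing:
  assumes "16*R \<le> n"
  shows "k_planar_drawing 3 {..<n} (EE R) (pos R) (gam R)"
  unfolding k_planar_drawing_def
proof (intro conjI ballI)
  show "inj_on (pos R) {..<n}" using pos_inj by (auto simp: inj_on_def)
next
  fix e assume e: "e \<in> EE R"
  obtain u v where uv: "e = {u,v}" "u \<noteq> v" "u < 16*R" "v < 16*R" using edge_basic[OF e] by blast
  have mm: "Min e = min u v" "Max e = max u v" using uv by auto
  have "pos R (min u v) \<noteq> pos R (max u v)" using pos_inj uv(2) by (metis max_def min_def)
  then show "arc (gam R e)" unfolding gam_def mm by simp
  have "e = {min u v, max u v}" using uv by (auto simp: min_def max_def)
  then show "\<exists>u v. e = {u, v} \<and> pathstart (gam R e) = pos R u \<and> pathfinish (gam R e) = pos R v"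
    unfolding gam_def mm by auto
  show "curve_interior (gam R e) \<inter> pos R ` {..<n} = {}" using novert[OF e] by blast
next
  fix e assume e: "e \<in> EE R"
  show "finite {(f, p). f \<in> EE R \<and> f \<noteq> e \<and> p \<in> curve_interior (gam R e) \<inter> curve_interior (gam R f)}"
    using crossings[OF e] by blast
  show "card {(f, p). f \<in> EE R \<and> f \<noteq> e \<and> p \<in> curve_interior (gam R e) \<inter> curve_interior (gam R f)} \<le> 3"
    using crossings[OF e] by blast
qed

lemma memEH: "y < R \<Longrightarrow> d \<in> set HD \<Longrightarrow> hedge y d \<in> EE R"
  unfolding EE_def EH_def by blast
lemma memEG: "y + 1 < R \<Longrightarrow> d \<in> set GD \<Longrightarrow> gedge y d \<in> EE R"
  unfolding EE_def EG_def by blast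

lemma five_cycle:
  assumes "2 \<le> R" "32 \<le> n"
  shows "has_cycle_of_length {..<n} (EE R) 5"
proof -
  define c where "c (i::nat) = (if i = 0 then 0 else if i = 1 then 19 else if i = 2 then 3 else if i = 3 then 2 else (1::nat))" for i
  have l5: "{..<5::nat} = {0,1,2,3,4}" by auto
  have "inj_on c {..<5}" unfolding l5 by (simp add: c_def)
  moreover have "c ` {..<5} \<subseteq> {..<n}" using assms(2) unfolding l5 by (auto simp: c_def)
  moreover have "\<forall>i<5. {c i, c ((i + 1) mod 5)} \<in> EE R"
  proof -
    have a: "{0::nat,19} \<in> EE R"
    proof -
      have "{0::nat,19} = gedge 0 (0,3)" by (auto simp: gedge_def)
      moreover have "gedge 0 (0,3) \<in> EE R" using assms(1) by (intro memEG) (auto simp: GD_def)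
      ultimately show ?thesis by simp
    qed
    have b: "{19::nat,3} \<in> EE R"
    proof -
      have "{19::nat,3} = gedge 0 (3,3)" by (auto simp: gedge_def)
      moreover have "gedge 0 (3,3) \<in> EE R" using assms(1) by (intro memEG) (auto simp: GD_def)
      ultimately show ?thesis by simp
    qed
    have c: "{3::nat,2} \<in> EE R"
    proof -
      have "{3::nat,2} = hedge 0 (2,3)" by (auto simp: hedge_def)
      moreover have "hedge 0 (2,3) \<in> EE R" using assms(1) by (intro memEH) (auto simp: HD_def)
      ultimately show ?thesis by simp
    qed
    have d: "{2::nat,1} \<in> EE R"
    proof -
      have "{2::nat,1} = hedge 0 (1,2)" by (auto simp: hedge_def)
      moreover have "hedge 0 (1,2) \<in> EE R" using assms(1) by (intro memEH) (auto simp: HD_def)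
      ultimately show ?thesis by simp
    qed
    have e: "{1::nat,0} \<in> EE R"
    proof -
      have "{1::nat,0} = hedge 0 (0,1)" by (auto simp: hedge_def)
      moreover have "hedge 0 (0,1) \<in> EE R" using assms(1) by (intro memEH) (auto simp: HD_def)
      ultimately show ?thesis by simp
    qed
    show ?thesis
    proof (intro allI impI)
      fix i :: nat assume "i < 5"
      then have "i = 0 \<or> i = 1 \<or> i = 2 \<or> i = 3 \<or> i = 4" by (simp add: less_Suc_eq numeral_eq_Suc)
      then show "{c i, c ((i + 1) mod 5)} \<in> EE R"
      proof (elim disjE)
        assume "i = 0" then show ?thesis using a by (simp add: c_def)
      next
        assume "i = 1" then show ?thesis using b by (simp add: c_def)
      next
        assume "i = 2" then show ?thesis using c by (simp add: c_def)
      next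
        assume "i = 3" then show ?thesis using d by (simp add: c_def)
      next
        assume "i = 4" then show ?thesis using e by (simp add: c_def)
      qed
    qed
  qed
  moreover have "(3::nat) \<le> 5" by simp
  ultimately show ?thesis unfolding has_cycle_of_length_def by blast
qed

lemma girth5:
  assumes "2 \<le> R" "32 \<le> n"
  shows "girth {..<n} (EE R) = 5"
  unfolding girth_def
proof (rule Least_equality)
  show "has_cycle_of_length {..<n} (EE R) 5" using five_cycle[OF assms] .
next
  fix L assume h: "has_cycle_of_length {..<n} (EE R) L"
  then have "L \<ge> 3" unfolding has_cycle_of_length_def by auto
  moreover have "L \<noteq> 3" using h no3 by blast
  moreover have "L \<noteq> 4" using h no4 by blast
  ultimately show "5 \<le> L" by linarith
qed

lemma hedge_inj:
  assumes "(x,x') \<in> set HD" "(z,z') \<in> set HD" "hedge y (x,x') = hedge y' (z,z')"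
  shows "y = y' \<and> x = z \<and> x' = z'"
proof -
  have f: "x < 16" "x' < 16" "z < 16" "z' < 16" "(x',x) \<notin> set HD" using HD_facts assms(1,2) by auto
  from assms(3) have "(16*y+x = 16*y'+z \<and> 16*y+x' = 16*y'+z') \<or> (16*y+x = 16*y'+z' \<and> 16*y+x' = 16*y'+z)"
    unfolding hedge_def by (auto simp: doubleton_eq_iff)
  then show ?thesis
  proof
    assume "16*y+x = 16*y'+z \<and> 16*y+x' = 16*y'+z'"
    then show ?thesis using eq16 f by blast
  next
    assume "16*y+x = 16*y'+z' \<and> 16*y+x' = 16*y'+z"
    then have "x = z'" "x' = z" using eq16 f by blast+
    then show ?thesis using assms(2) f(5) by simp
  qed
qed

lemma gedge_inj:
  assumes "(x,x') \<in> set GD" "(z,z') \<in> set GD" "gedge y (x,x') = gedge y' (z,z')"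
  shows "y = y' \<and> x = z \<and> x' = z'"
proof -
  have f: "x < 16" "x' < 16" "z < 16" "z' < 16" using GD_facts assms(1,2) by auto
  from assms(3) have "(16*y+x = 16*y'+z \<and> 16*(y+1)+x' = 16*(y'+1)+z') \<or> (16*y+x = 16*(y'+1)+z' \<and> 16*(y+1)+x' = 16*y'+z)"
    unfolding gedge_def by (auto simp: doubleton_eq_iff)
  then show ?thesis
  proof
    assume h: "16*y+x = 16*y'+z \<and> 16*(y+1)+x' = 16*(y'+1)+z'"
    then have "y = y'" "x = z" using eq16 f by blast+
    moreover have "x' = z'" using h \<open>y = y'\<close> by simp
    ultimately show ?thesis by simp
  next
    assume h: "16*y+x = 16*(y'+1)+z' \<and> 16*(y+1)+x' = 16*y'+z"
    then have "y = y'+1" using eq16[of x z' y "y'+1"] f by simp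
    moreover have "y+1 = y'" using h eq16[of x' z "y+1" y'] f by simp
    ultimately show ?thesis by simp
  qed
qed

lemma card_EE:
  assumes "1 \<le> R"
  shows "card (EE R) = 16*R + 24*(R-1)"
proof -
  have EHi: "EH R = (\<lambda>(y,d). hedge y d) ` ({..<R} \<times> set HD)" unfolding EH_def by auto
  have EGi: "EG R = (\<lambda>(y,d). gedge y d) ` ({..<R-1} \<times> set GD)" unfolding EG_def by force
  have injH: "inj_on (\<lambda>(y,d). hedge y d) ({..<R} \<times> set HD)"
    unfolding inj_on_def using hedge_inj by fastforce
  have injG: "inj_on (\<lambda>(y,d). gedge y d) ({..<R-1} \<times> set GD)"
    unfolding inj_on_def using gedge_inj by fastforce
  have disj: "EH R \<inter> EG R = {}"
  proof -
    have False if "hedge y (x,x') = gedge y' (z,z')" "(x,x') \<in> set HD" "(z,z') \<in> set GD" for y x x' y' z z'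
    proof -
      have f: "x < 16" "x' < 16" "z < 16" "z' < 16" using HD_facts GD_facts that(2,3) by auto
      from that(1) have "(16*y+x = 16*y'+z \<and> 16*y+x' = 16*(y'+1)+z') \<or> (16*y+x = 16*(y'+1)+z' \<and> 16*y+x' = 16*y'+z)"
        unfolding hedge_def gedge_def by (auto simp: doubleton_eq_iff)
      then show False
      proof
        assume h: "16*y+x = 16*y'+z \<and> 16*y+x' = 16*(y'+1)+z'"
        then have "y = y'" using eq16 f by blast
        moreover have "y = y'+1" using h eq16[of x' z' y "y'+1"] f by simp
        ultimately show False by simp
      next
        assume h: "16*y+x = 16*(y'+1)+z' \<and> 16*y+x' = 16*y'+z"
        then have "y = y'+1" using eq16[of x z' y "y'+1"] f by simp
        moreover have "y = y'" using h eq16[of x' z y y'] f by simp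
        ultimately show False by simp
      qed
    qed
    then have **: False if "hedge y d = gedge y' d'" "d \<in> set HD" "d' \<in> set GD" for y d y' d'
      using that by (cases d; cases d') blast
    then show ?thesis unfolding EH_def EG_def by blast
  qed
  have cH: "card (EH R) = 16*R" unfolding EHi using card_image[OF injH] by (simp add: card_cartesian_product HD_card)
  have cG: "card (EG R) = 24*(R-1)" unfolding EGi using card_image[OF injG] by (simp add: card_cartesian_product GD_card)
  have "finite (EH R)" "finite (EG R)" unfolding EHi EGi by auto
  then have "card (EE R) = card (EH R) + card (EG R)" unfolding EE_def using disj card_Un_disjoint by blast
  then show ?thesis using cH cG by simp
qed

lemma main22:
  assumes n: "32 \<le> n"
  shows "\<exists>(V :: nat set) (E :: nat set set).
           simple_graph V E \<and> card V = n \<and> k_planar 3 V E \<and> girth V E = 5 \<and>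
           real (card E) \<ge> 2.5 * real n - 64"
proof -
  define R where "R = n div 16"
  have R2: "2 \<le> R" using n unfolding R_def by simp
  have Rn: "16*R \<le> n" "n < 16*R + 16" unfolding R_def by simp_all
  have sg: "simple_graph {..<n} (EE R)"
    unfolding simple_graph_def
  proof (intro conjI ballI)
    fix e assume "e \<in> EE R"
    then obtain u v where "e = {u,v}" "u \<noteq> v" "u < 16*R" "v < 16*R" using edge_basic by blast
    then show "e \<subseteq> {..<n}" "card e = 2" using Rn by auto
  qed simp
  have kp: "k_planar 3 {..<n} (EE R)" unfolding k_planar_def using drawing[OF Rn(1)] by blast
  have cE: "card (EE R) = 16*R + 24*(R-1)" using card_EE R2 by simp
  have "real (card (EE R)) = 40 * real R - 24" using cE R2 by (simp add: of_nat_diff)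
  moreover have "real n < 16 * real R + 16" using Rn(2) by linarith
  ultimately have ineq: "real (card (EE R)) \<ge> 2.5 * real n - 64" by linarith
  have cV: "card {..<n} = n" by simp
  show ?thesis using sg kp girth5[OF R2 n] ineq cV by blast
qed

theorem theorem22:
  shows "\<exists>C::real. \<exists>N::nat. \<forall>n\<ge>N. \<exists>(V :: nat set) (E :: nat set set).
           simple_graph V E \<and> card V = n \<and> k_planar 3 V E \<and> girth V E = 5 \<and>
           real (card E) \<ge> 2.5 * real n - C"
  apply (rule exI[of _ 64])
  apply (rule exI[of _ 32])
  apply (intro allI impI)
  apply (erule main22)
  done

end
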